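(* Let $G=(V,E)$ be a finite, simple, connected reflective graph, and let $x\sim y$ and $x'\sim y'$ be edges. The following are equivalent: (i) $(x,y)\parallel(x',y')$; (ii) $V_x^y=V_{x'}^{y'}$ and $V_y^x=V_{y'}^{x'}$. In particular, if these conditions hold, then $d(x,z)-d(y,z)=d(x',z)-d(y',z)$ for all $z\in V$.
   Context: $d$ is the combinatorial distance. For adjacent $x\sim y$ let $V_x^y=\{v: d(v,x)<d(v,y)\}$, $V^{xy}=\{v:d(v,x)=d(v,y)\}$. A reflection from $x$ to $y$ is a graph automorphism $\phi$ with $\phi\circ\phi=\mathrm{id}$, $\phi(x)=y$, such that the edges between $V_x^y$ and $V_y^x$ are exactly $\{\{x',\phi(x')\}:x'\in V_x^y\}$ and $\phi$ fixes $V^{xy}$ pointwise. $G$ is reflective if every edge admits a reflection. For edges $x\sim y$, $x'\sim y'$ we write $(x,y)\parallel(x',y')$ if $x'\in V_x^y$ and $y'\in V_y^x$. *)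

theory Defs
  imports Main
begin

definition simple_graph :: "'a set \<Rightarrow> ('a \<Rightarrow> 'a \<Rightarrow> bool) \<Rightarrow> bool" where
  "simple_graph V E \<longleftrightarrow> finite V \<and> (\<forall>u v. E u v \<longrightarrow> u \<in> V \<and> v \<in> V)
     \<and> (\<forall>u v. E u v \<longrightarrow> E v u) \<and> (\<forall>u. \<not> E u u)"

definition walk :: "'a set \<Rightarrow> ('a \<Rightarrow> 'a \<Rightarrow> bool) \<Rightarrow> 'a list \<Rightarrow> bool" where
  "walk V E xs \<longleftrightarrow> xs \<noteq> [] \<and> set xs \<subseteq> V \<and> (\<forall>i < length xs - 1. E (xs ! i) (xs ! Suc i))"

definition connected_graph :: "'a set \<Rightarrow> ('a \<Rightarrow> 'a \<Rightarrow> bool) \<Rightarrow> bool" where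
  "connected_graph V E \<longleftrightarrow> (\<forall>u\<in>V. \<forall>v\<in>V. \<exists>xs. walk V E xs \<and> hd xs = u \<and> last xs = v)"

definition gdist :: "'a set \<Rightarrow> ('a \<Rightarrow> 'a \<Rightarrow> bool) \<Rightarrow> 'a \<Rightarrow> 'a \<Rightarrow> nat" where
  "gdist V E u v = (LEAST n. \<exists>xs. walk V E xs \<and> hd xs = u \<and> last xs = v \<and> length xs = Suc n)"

definition halfspace :: "'a set \<Rightarrow> ('a \<Rightarrow> 'a \<Rightarrow> bool) \<Rightarrow> 'a \<Rightarrow> 'a \<Rightarrow> 'a set" where
  "halfspace V E x y = {v \<in> V. gdist V E v x < gdist V E v y}"

definition midset :: "'a set \<Rightarrow> ('a \<Rightarrow> 'a \<Rightarrow> bool) \<Rightarrow> 'a \<Rightarrow> 'a \<Rightarrow> 'a set" where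
  "midset V E x y = {v \<in> V. gdist V E v x = gdist V E v y}"

definition graph_automorphism :: "'a set \<Rightarrow> ('a \<Rightarrow> 'a \<Rightarrow> bool) \<Rightarrow> ('a \<Rightarrow> 'a) \<Rightarrow> bool" where
  "graph_automorphism V E \<phi> \<longleftrightarrow> bij_betw \<phi> V V \<and> (\<forall>u\<in>V. \<forall>v\<in>V. E u v \<longleftrightarrow> E (\<phi> u) (\<phi> v))"

definition reflection :: "'a set \<Rightarrow> ('a \<Rightarrow> 'a \<Rightarrow> bool) \<Rightarrow> 'a \<Rightarrow> 'a \<Rightarrow> ('a \<Rightarrow> 'a) \<Rightarrow> bool" where
  "reflection V E x y \<phi> \<longleftrightarrow>
     graph_automorphism V E \<phi> \<and> (\<forall>v\<in>V. \<phi> (\<phi> v) = v) \<and> \<phi> x = y \<and>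
     (\<forall>a\<in>halfspace V E x y. \<phi> a \<in> halfspace V E y x \<and> E a (\<phi> a)) \<and>
     (\<forall>a\<in>halfspace V E x y. \<forall>b\<in>halfspace V E y x. E a b \<longrightarrow> b = \<phi> a) \<and>
     (\<forall>v\<in>midset V E x y. \<phi> v = v)"

definition reflective :: "'a set \<Rightarrow> ('a \<Rightarrow> 'a \<Rightarrow> bool) \<Rightarrow> bool" where
  "reflective V E \<longleftrightarrow> (\<forall>x y. E x y \<longrightarrow> (\<exists>\<phi>. reflection V E x y \<phi>))"

definition parallel_edges :: "'a set \<Rightarrow> ('a \<Rightarrow> 'a \<Rightarrow> bool) \<Rightarrow> 'a \<Rightarrow> 'a \<Rightarrow> 'a \<Rightarrow> 'a \<Rightarrow> bool" where
  "parallel_edges V E x y x' y' \<longleftrightarrow> x' \<in> halfspace V E x y \<and> y' \<in> halfspace V E y x"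

end

theory Submission
  imports Defs
begin

lemma walk_Cons: "walk V E (a # ys) \<longleftrightarrow> a \<in> V \<and> (ys = [] \<or> (E a (hd ys) \<and> walk V E ys))"
proof (cases ys)
  case Nil
  then show ?thesis by (simp add: walk_def)
next
  case (Cons b zs)
  then show ?thesis
    by (auto simp add: walk_def less_Suc_eq_0_disj)
qed

lemma walk_append:
  "walk V E xs \<Longrightarrow> walk V E ys \<Longrightarrow> last xs = hd ys \<Longrightarrow> walk V E (xs @ tl ys)"
proof (induction xs)
  case Nil
  then show ?case by (simp add: walk_def)
next
  case (Cons a xs)
  show ?case
  proof (cases "xs = []")
    case True
    then show ?thesis using Cons.prems by (cases ys) (auto simp: walk_def)
  next
    case False
    have "walk V E xs" "a \<in> V" "E a (hd xs)" using Cons.prems(1) False by (auto simp: walk_Cons)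
    moreover have "last xs = hd ys" using Cons.prems(3) False by simp
    ultimately have "walk V E (xs @ tl ys)" using Cons.IH Cons.prems(2) by blast
    then show ?thesis using False \<open>a \<in> V\<close> \<open>E a (hd xs)\<close> by (simp add: walk_Cons)
  qed
qed

lemma walk_hd_last_in: "walk V E xs \<Longrightarrow> hd xs \<in> V \<and> last xs \<in> V"
  by (auto simp: walk_def)

lemma walk_rev:
  assumes "\<And>u v. E u v \<Longrightarrow> E v u"
  shows "walk V E xs \<Longrightarrow> walk V E (rev xs)"
proof (induction xs)
  case Nil
  then show ?case by (simp add: walk_def)
next
  case (Cons a ys)
  show ?case
  proof (cases "ys = []")
    case True
    then show ?thesis using Cons.prems by simp
  next
    case False
    have w: "walk V E ys" "a \<in> V" "E a (hd ys)" using Cons.prems False by (auto simp: walk_Cons)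
    have "walk V E [hd ys, a]" using w assms walk_hd_last_in[OF w(1)] by (auto simp: walk_Cons)
    moreover have "last (rev ys) = hd ys" using False by (simp add: last_rev)
    ultimately have "walk V E (rev ys @ tl [hd ys, a])"
      using walk_append Cons.IH w(1) by (metis list.sel(1))
    then show ?thesis by simp
  qed
qed

context
  fixes V :: "'a set" and E :: "'a \<Rightarrow> 'a \<Rightarrow> bool"
  assumes sg: "simple_graph V E" and cg: "connected_graph V E"
begin

lemma E_V: "E u v \<Longrightarrow> u \<in> V \<and> v \<in> V" using sg by (simp add: simple_graph_def)
lemma E_sym: "E u v \<Longrightarrow> E v u" using sg by (simp add: simple_graph_def)
lemma E_irr: "\<not> E u u" using sg by (simp add: simple_graph_def)

lemma gd_walk:
  assumes "u \<in> V" "v \<in> V"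
  shows "\<exists>xs. walk V E xs \<and> hd xs = u \<and> last xs = v \<and> length xs = Suc (gdist V E u v)"
proof -
  obtain xs where xs: "walk V E xs" "hd xs = u" "last xs = v"
    using cg assms by (auto simp: connected_graph_def)
  then have "length xs = Suc (length xs - 1)" by (cases xs) (auto simp: walk_def)
  then have "\<exists>n. \<exists>xs. walk V E xs \<and> hd xs = u \<and> last xs = v \<and> length xs = Suc n"
    using xs by blast
  then show ?thesis unfolding gdist_def by (rule LeastI_ex)
qed

lemma gd_le:
  assumes "walk V E xs" "hd xs = u" "last xs = v"
  shows "gdist V E u v \<le> length xs - 1"
proof -
  have "length xs = Suc (length xs - 1)" using assms by (cases xs) (auto simp: walk_def)
  then show ?thesis unfolding gdist_def using assms by (intro Least_le) blast
qed

lemma gd_sym: assumes "u \<in> V" "v \<in> V" shows "gdist V E u v = gdist V E v u"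
proof -
  have H: "gdist V E a b \<le> gdist V E b a" if ab: "a \<in> V" "b \<in> V" for a b
  proof -
    obtain xs where xs: "walk V E xs" "hd xs = b" "last xs = a" "length xs = Suc (gdist V E b a)"
      using gd_walk ab by blast
    have "walk V E (rev xs)" using walk_rev[of E V xs] E_sym xs(1) by blast
    moreover have "xs \<noteq> []" using xs(1) by (simp add: walk_def)
    ultimately show ?thesis using gd_le[of "rev xs" a b] xs by (simp add: hd_rev last_rev)
  qed
  show ?thesis using H[OF assms] H[OF assms(2) assms(1)] by linarith
qed

lemma gd_tri: assumes "u \<in> V" "v \<in> V" "w \<in> V"
  shows "gdist V E u w \<le> gdist V E u v + gdist V E v w"
proof -
  obtain xs where xs: "walk V E xs" "hd xs = u" "last xs = v" "length xs = Suc (gdist V E u v)"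
    using gd_walk assms by blast
  obtain ys where ys: "walk V E ys" "hd ys = v" "last ys = w" "length ys = Suc (gdist V E v w)"
    using gd_walk assms by blast
  have wa: "walk V E (xs @ tl ys)" using walk_append xs ys by metis
  have "xs \<noteq> []" "ys \<noteq> []" using xs ys by (auto simp: walk_def)
  have h1: "hd (xs @ tl ys) = u" using xs \<open>xs \<noteq> []\<close> by simp
  have h2: "last (xs @ tl ys) = w"
  proof (cases "tl ys = []")
    case True
    then have "ys = [hd ys]" using \<open>ys \<noteq> []\<close> by (metis list.collapse)
    then have "last ys = hd ys" by (metis last.simps)
    then show ?thesis using True xs ys by simp
  next
    case False
    then show ?thesis using ys \<open>ys \<noteq> []\<close> by (simp add: last_tl)
  qed
  have "gdist V E u w \<le> length (xs @ tl ys) - 1" using gd_le wa h1 h2 by blast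
  then show ?thesis using xs ys by simp
qed

lemma gd_edge: "E u v \<Longrightarrow> gdist V E u v \<le> 1"
  using gd_le[of "[u,v]" u v] E_V by (simp add: walk_Cons)

lemma gd_refl: "u \<in> V \<Longrightarrow> gdist V E u u = 0"
  using gd_le[of "[u]" u u] by (simp add: walk_Cons)

lemma gd_zero: "u \<in> V \<Longrightarrow> v \<in> V \<Longrightarrow> gdist V E u v = 0 \<Longrightarrow> u = v"
proof -
  assume a: "u \<in> V" "v \<in> V" "gdist V E u v = 0"
  then obtain xs where xs: "walk V E xs" "hd xs = u" "last xs = v" "length xs = 1"
    using gd_walk by fastforce
  then obtain c where "xs = [c]" by (cases xs) auto
  then show "u = v" using xs by simp
qed

lemma gd_edge_pos: "E u v \<Longrightarrow> gdist V E u v = 1"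
  using gd_edge gd_zero E_V E_irr by (metis le_neq_implies_less less_one)

lemma nonexp_walk:
  assumes FV: "\<And>v. v \<in> V \<Longrightarrow> F v \<in> V"
    and FE: "\<And>u v. E u v \<Longrightarrow> F u = F v \<or> E (F u) (F v)"
  shows "walk V E xs \<Longrightarrow> gdist V E (F (hd xs)) (F (last xs)) \<le> length xs - 1"
proof (induction xs)
  case Nil
  then show ?case by (simp add: walk_def)
next
  case (Cons a ys)
  show ?case
  proof (cases "ys = []")
    case True
    then show ?thesis using Cons.prems gd_refl FV by (simp add: walk_Cons)
  next
    case False
    have w: "walk V E ys" "a \<in> V" "E a (hd ys)" using Cons.prems False by (auto simp: walk_Cons)
    have hv: "hd ys \<in> V" "last ys \<in> V" using walk_hd_last_in[OF w(1)] by auto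
    have "gdist V E (F a) (F (hd ys)) \<le> 1"
      using FE[OF w(3)] gd_edge gd_refl[OF FV[OF hv(1)]] by auto
    moreover have "gdist V E (F a) (F (last ys)) \<le> gdist V E (F a) (F (hd ys)) + gdist V E (F (hd ys)) (F (last ys))"
      using gd_tri FV hv w(2) by blast
    moreover have "length ys \<ge> 1" using False by (cases ys) auto
    ultimately show ?thesis using Cons.IH[OF w(1)] False by simp
  qed
qed

lemma nonexp:
  assumes FV: "\<And>v. v \<in> V \<Longrightarrow> F v \<in> V"
    and FE: "\<And>u v. E u v \<Longrightarrow> F u = F v \<or> E (F u) (F v)"
    and "u \<in> V" "v \<in> V"
  shows "gdist V E (F u) (F v) \<le> gdist V E u v"
proof -
  obtain xs where xs: "walk V E xs" "hd xs = u" "last xs = v" "length xs = Suc (gdist V E u v)"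
    using gd_walk assms by blast
  show ?thesis using nonexp_walk[OF FV FE xs(1)] xs by simp
qed


lemma r_aut: "reflection V E x y \<phi> \<Longrightarrow> graph_automorphism V E \<phi>"
  unfolding reflection_def by blast
lemma r_x: "reflection V E x y \<phi> \<Longrightarrow> \<phi> x = y"
  unfolding reflection_def by blast
lemma r_Hin: "reflection V E x y \<phi> \<Longrightarrow> a \<in> halfspace V E x y \<Longrightarrow> \<phi> a \<in> halfspace V E y x \<and> E a (\<phi> a)"
  unfolding reflection_def by blast
lemma r_cross: "reflection V E x y \<phi> \<Longrightarrow> a \<in> halfspace V E x y \<Longrightarrow> b \<in> halfspace V E y x \<Longrightarrow> E a b \<Longrightarrow> b = \<phi> a"
  unfolding reflection_def by blast
lemma r_mid: "reflection V E x y \<phi> \<Longrightarrow> a \<in> midset V E x y \<Longrightarrow> \<phi> a = a"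
  unfolding reflection_def by blast

lemma rV: "reflection V E x y \<phi> \<Longrightarrow> v \<in> V \<Longrightarrow> \<phi> v \<in> V"
  using r_aut unfolding graph_automorphism_def by (metis bij_betwE)

lemma rinv: "reflection V E x y \<phi> \<Longrightarrow> v \<in> V \<Longrightarrow> \<phi> (\<phi> v) = v"
  unfolding reflection_def by blast

lemma rE: "reflection V E x y \<phi> \<Longrightarrow> E u v \<Longrightarrow> E (\<phi> u) (\<phi> v)"
proof -
  assume r: "reflection V E x y \<phi>" and uv: "E u v"
  have "\<forall>u\<in>V. \<forall>v\<in>V. E u v \<longleftrightarrow> E (\<phi> u) (\<phi> v)" using r_aut[OF r] unfolding graph_automorphism_def by blast
  then show ?thesis using uv E_V[OF uv] by blast
qed

lemma rdist:
  assumes r: "reflection V E x y \<phi>" and "u \<in> V" "v \<in> V"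
  shows "gdist V E (\<phi> u) (\<phi> v) = gdist V E u v"
proof -
  have FV: "\<And>v. v \<in> V \<Longrightarrow> \<phi> v \<in> V" using rV[OF r] .
  have FE: "\<And>u v. E u v \<Longrightarrow> \<phi> u = \<phi> v \<or> E (\<phi> u) (\<phi> v)" using rE[OF r] by blast
  have 1: "gdist V E (\<phi> u) (\<phi> v) \<le> gdist V E u v" using nonexp[where F=\<phi>, OF FV FE] assms by blast
  have "gdist V E (\<phi> (\<phi> u)) (\<phi> (\<phi> v)) \<le> gdist V E (\<phi> u) (\<phi> v)"
    using nonexp[where F=\<phi>, OF FV FE] assms FV by blast
  then show ?thesis using 1 rinv[OF r] assms by simp
qed

lemma ry: "reflection V E x y \<phi> \<Longrightarrow> E x y \<Longrightarrow> \<phi> y = x"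
  using rinv r_x E_V by metis

lemma rK: assumes r: "reflection V E x y \<phi>" and xy: "E x y" and v: "v \<in> halfspace V E y x"
  shows "\<phi> v \<in> halfspace V E x y"
proof -
  have V: "v \<in> V" "x \<in> V" "y \<in> V" using v E_V[OF xy] by (auto simp: halfspace_def)
  have "gdist V E (\<phi> v) x = gdist V E v y" using rdist[OF r V(1) V(3)] ry[OF r xy] by simp
  moreover have "gdist V E (\<phi> v) y = gdist V E v x" using rdist[OF r V(1) V(2)] r_x[OF r]
    by simp
  ultimately show ?thesis using v rV[OF r V(1)] by (simp add: halfspace_def)
qed

lemma rH: "reflection V E x y \<phi> \<Longrightarrow> v \<in> halfspace V E x y \<Longrightarrow> \<phi> v \<in> halfspace V E y x"
  using r_Hin by blast

lemma fold:
  assumes r: "reflection V E x y \<phi>" and xy: "E x y"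
    and z: "z \<in> halfspace V E x y" and w: "w \<in> halfspace V E x y"
  shows "gdist V E z w \<le> gdist V E z (\<phi> w)"
proof -
  define F where "F v = (if v \<in> halfspace V E y x then \<phi> v else v)" for v
  have FV: "\<And>v. v \<in> V \<Longrightarrow> F v \<in> V" using rV[OF r] by (simp add: F_def)
  have FE: "F u = F v \<or> E (F u) (F v)" if uv: "E u v" for u v
  proof -
    have V: "u \<in> V" "v \<in> V" using E_V[OF uv] by auto
    have cross: "b = \<phi> a" if "a \<in> halfspace V E x y" "b \<in> halfspace V E y x" "E a b" for a b
      using r_cross[OF r] that by blast
    have mid: "\<phi> a = a" if "a \<in> V" "a \<notin> halfspace V E x y" "a \<notin> halfspace V E y x" for a
    proof -
      have "a \<in> midset V E x y" using that by (auto simp: halfspace_def midset_def)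
      then show ?thesis using r_mid[OF r] by blast
    qed
    show ?thesis
    proof (cases "u \<in> halfspace V E y x")
      case uK: True
      show ?thesis
      proof (cases "v \<in> halfspace V E y x")
        case True
        then show ?thesis using uK rE[OF r uv] by (simp add: F_def)
      next
        case vK: False
        show ?thesis
        proof (cases "v \<in> halfspace V E x y")
          case True
          then have "u = \<phi> v" using cross uK E_sym[OF uv] by blast
          then show ?thesis using uK vK rinv[OF r V(2)] by (simp add: F_def)
        next
          case False
          then show ?thesis using uK vK mid[OF V(2)] rE[OF r uv] by (simp add: F_def)
        qed
      qed
    next
      case uK: False
      show ?thesis
      proof (cases "v \<in> halfspace V E y x")
        case vK: True
        show ?thesis
        proof (cases "u \<in> halfspace V E x y")
          case True
          then have "v = \<phi> u" using cross vK uv by blast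
          then show ?thesis using uK vK rinv[OF r V(1)] by (simp add: F_def)
        next
          case False
          then show ?thesis using uK vK mid[OF V(1)] rE[OF r uv] by (metis F_def)
        qed
      next
        case False
        then show ?thesis using uK uv by (simp add: F_def)
      qed
    qed
  qed
  have zV: "z \<in> V" and wV: "w \<in> V" using z w by (auto simp: halfspace_def)
  have "gdist V E (F z) (F (\<phi> w)) \<le> gdist V E z (\<phi> w)"
    using nonexp[where F=F, OF FV FE] zV rV[OF r wV] by blast
  moreover have "F z = z" using z by (auto simp: F_def halfspace_def)
  moreover have "F (\<phi> w) = w" using rH[OF r w] rinv[OF r wV] by (simp add: F_def)
  ultimately show ?thesis by simp
qed

lemma S1:
  assumes r: "reflection V E x y \<phi>" and xy: "E x y" and w: "w \<in> halfspace V E x y"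
  shows "halfspace V E w (\<phi> w) \<subseteq> halfspace V E x y \<and> halfspace V E (\<phi> w) w \<subseteq> halfspace V E y x"
proof -
  have wV: "w \<in> V" using w by (simp add: halfspace_def)
  have pwV: "\<phi> w \<in> V" using rV[OF r wV] .
  have mid: "\<phi> a = a" if "a \<in> V" "a \<notin> halfspace V E x y" "a \<notin> halfspace V E y x" for a
  proof -
    have "a \<in> midset V E x y" using that by (auto simp: halfspace_def midset_def)
    then show ?thesis using r_mid[OF r] by blast
  qed
  have A: "v \<in> halfspace V E x y" if v: "v \<in> halfspace V E w (\<phi> w)" for v
  proof (rule ccontr)
    assume nH: "v \<notin> halfspace V E x y"
    have vV: "v \<in> V" and lt: "gdist V E v w < gdist V E v (\<phi> w)" using v by (auto simp: halfspace_def)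
    show False
    proof (cases "v \<in> halfspace V E y x")
      case True
      have pv: "\<phi> v \<in> halfspace V E x y" using rK[OF r xy True] .
      have "gdist V E (\<phi> v) w \<le> gdist V E (\<phi> v) (\<phi> w)" using fold[OF r xy pv w] .
      moreover have "gdist V E (\<phi> v) w = gdist V E v (\<phi> w)"
        using rdist[OF r vV pwV] rinv[OF r wV] by simp
      moreover have "gdist V E (\<phi> v) (\<phi> w) = gdist V E v w" using rdist[OF r vV wV] .
      ultimately show False using lt by simp
    next
      case False
      then have "\<phi> v = v" using mid vV nH by blast
      then have "gdist V E v (\<phi> w) = gdist V E v w" using rdist[OF r vV wV] by simp
      then show False using lt by simp
    qed
  qed
  have B: "v \<in> halfspace V E y x" if v: "v \<in> halfspace V E (\<phi> w) w" for v
  proof (rule ccontr)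
    assume nK: "v \<notin> halfspace V E y x"
    have vV: "v \<in> V" and lt: "gdist V E v (\<phi> w) < gdist V E v w" using v by (auto simp: halfspace_def)
    show False
    proof (cases "v \<in> halfspace V E x y")
      case True
      have "gdist V E v w \<le> gdist V E v (\<phi> w)" using fold[OF r xy True w] .
      then show False using lt by simp
    next
      case False
      then have "\<phi> v = v" using mid vV nK by blast
      then have "gdist V E v (\<phi> w) = gdist V E v w" using rdist[OF r vV wV] by simp
      then show False using lt by simp
    qed
  qed
  show ?thesis using A B by blast
qed

lemma C:
  assumes rf: "reflective V E" and r: "reflection V E x y \<phi>" and xy: "E x y"
    and w: "w \<in> halfspace V E x y"
  shows "halfspace V E w (\<phi> w) = halfspace V E x y \<and> halfspace V E (\<phi> w) w = halfspace V E y x"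
proof -
  have wV: "w \<in> V" using w by (simp add: halfspace_def)
  have pwV: "\<phi> w \<in> V" using rV[OF r wV] .
  have xV: "x \<in> V" and yV: "y \<in> V" using E_V[OF xy] by auto
  have ew: "E w (\<phi> w)" using r_Hin[OF r w] by blast
  obtain \<psi> where r2: "reflection V E w (\<phi> w) \<psi>" using rf ew by (auto simp: reflective_def)
  have px: "\<phi> x = y" using r_x[OF r] .
  have py: "\<phi> y = x" using ry[OF r xy] .
  have w1: "gdist V E w x < gdist V E w y" using w by (simp add: halfspace_def)
  have d1: "gdist V E x (\<phi> w) = gdist V E y w"
    using rdist[OF r xV wV] px by (metis gd_sym pwV xV yV wV rdist[OF r yV wV] py)
  have d2: "gdist V E y (\<phi> w) = gdist V E x w"
    using rdist[OF r xV wV] px by simp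
  have xin: "x \<in> halfspace V E w (\<phi> w)"
    using xV w1 d1 gd_sym[OF xV wV] gd_sym[OF yV wV] by (simp add: halfspace_def)
  have yin: "y \<in> halfspace V E (\<phi> w) w"
    using yV w1 d1 d2 gd_sym[OF xV wV] gd_sym[OF yV wV] by (simp add: halfspace_def)
  have psx: "\<psi> x = y" using r_cross[OF r2 xin yin xy] by simp
  have s1: "halfspace V E w (\<phi> w) \<subseteq> halfspace V E x y \<and> halfspace V E (\<phi> w) w \<subseteq> halfspace V E y x"
    using S1[OF r xy w] .
  have s2: "halfspace V E x y \<subseteq> halfspace V E w (\<phi> w) \<and> halfspace V E y x \<subseteq> halfspace V E (\<phi> w) w"
    using S1[OF r2 ew xin] psx by simp
  show ?thesis using s1 s2 by blast
qed

lemma diffval: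
  assumes ab: "E a b" and z: "z \<in> V"
  shows "int (gdist V E a z) - int (gdist V E b z) =
    (if z \<in> halfspace V E a b then -1 else if z \<in> halfspace V E b a then 1 else 0)"
proof -
  have aV: "a \<in> V" and bV: "b \<in> V" using E_V[OF ab] by auto
  have 1: "gdist V E z a \<le> gdist V E z b + gdist V E b a" using gd_tri z aV bV by blast
  have 2: "gdist V E z b \<le> gdist V E z a + gdist V E a b" using gd_tri z aV bV by blast
  have "gdist V E b a \<le> 1" "gdist V E a b \<le> 1" using gd_edge ab E_sym by auto
  then show ?thesis using 1 2 gd_sym[OF aV z] gd_sym[OF bV z] z
    by (auto simp: halfspace_def)
qed
end

theorem lemma2p3:
  fixes V :: "'a set" and E :: "'a \<Rightarrow> 'a \<Rightarrow> bool" and x y x' y' :: 'a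
  assumes "simple_graph V E" and "connected_graph V E" and "reflective V E"
    and "E x y" and "E x' y'"
  shows "(parallel_edges V E x y x' y' \<longleftrightarrow>
            halfspace V E x y = halfspace V E x' y' \<and> halfspace V E y x = halfspace V E y' x')
       \<and> (parallel_edges V E x y x' y' \<longrightarrow>
            (\<forall>z\<in>V. int (gdist V E x z) - int (gdist V E y z)
                   = int (gdist V E x' z) - int (gdist V E y' z)))"
proof -
  note sg = assms(1) and cg = assms(2)
  obtain \<phi> where r: "reflection V E x y \<phi>" using assms(3,4) by (auto simp: reflective_def)
  have x'V: "x' \<in> V" and y'V: "y' \<in> V" using E_V[OF sg cg assms(5)] by auto
  have I: "halfspace V E x y = halfspace V E x' y' \<and> halfspace V E y x = halfspace V E y' x'"
    if p: "parallel_edges V E x y x' y'"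
  proof -
    have a: "x' \<in> halfspace V E x y" "y' \<in> halfspace V E y x" using p by (auto simp: parallel_edges_def)
    have "y' = \<phi> x'" using r_cross[OF sg cg r a assms(5)] .
    then show ?thesis using C[OF sg cg assms(3) r assms(4) a(1)] by simp
  qed
  have II: "parallel_edges V E x y x' y'"
    if h: "halfspace V E x y = halfspace V E x' y' \<and> halfspace V E y x = halfspace V E y' x'"
  proof -
    have "gdist V E x' y' = 1" "gdist V E y' x' = 1"
      using gd_edge_pos[OF sg cg] assms(5) E_sym[OF sg cg] by auto
    then have "x' \<in> halfspace V E x' y'" "y' \<in> halfspace V E y' x'"
      using x'V y'V gd_refl[OF sg cg] by (auto simp: halfspace_def)
    then show ?thesis using h by (simp add: parallel_edges_def)
  qed
  have III: "\<forall>z\<in>V. int (gdist V E x z) - int (gdist V E y z)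
                   = int (gdist V E x' z) - int (gdist V E y' z)"
    if p: "parallel_edges V E x y x' y'"
  proof
    fix z assume z: "z \<in> V"
    show "int (gdist V E x z) - int (gdist V E y z) = int (gdist V E x' z) - int (gdist V E y' z)"
      using diffval[OF sg cg assms(4) z] diffval[OF sg cg assms(5) z] I[OF p] by simp
  qed
  show ?thesis using I II III by blast
qed

end
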